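(* Let $\{R_i\}_{i\in I}$ be a family of commutative rings with identity and $R=\prod_{i\in I}R_i$. Then $R$ is nearly reduced if and only if each $R_i$ is nearly reduced.
   Context: For a ring $A$, $\mathfrak{N}(A)$ is the nilradical, $\mathrm{reg}(A)$ the set of regular elements (non-zero-divisors), and $\mathrm{areg}(A)=\{x\in A: x+\mathfrak{N}(A)\in\mathrm{reg}(A/\mathfrak{N}(A))\}$ (equivalently, $xa\in\mathfrak{N}(A)$ implies $a\in\mathfrak{N}(A)$). $A$ is nearly reduced if $\mathrm{reg}(A)=\mathrm{areg}(A)$ (equivalently, no nonzero element is annihilated by an element of $\mathrm{areg}(A)$). *)

theory Defs
  imports "HOL-Algebra.Ring"
begin

definition nilradical :: "('a, 'b) ring_scheme \<Rightarrow> 'a set" where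
  "nilradical A = {x \<in> carrier A. \<exists>n::nat. x [^]\<^bsub>A\<^esub> n = \<zero>\<^bsub>A\<^esub>}"

definition reg :: "('a, 'b) ring_scheme \<Rightarrow> 'a set" where
  "reg A = {x \<in> carrier A. \<forall>a \<in> carrier A. x \<otimes>\<^bsub>A\<^esub> a = \<zero>\<^bsub>A\<^esub> \<longrightarrow> a = \<zero>\<^bsub>A\<^esub>}"

definition areg :: "('a, 'b) ring_scheme \<Rightarrow> 'a set" where
  "areg A = {x \<in> carrier A. \<forall>a \<in> carrier A.
      x \<otimes>\<^bsub>A\<^esub> a \<in> nilradical A \<longrightarrow> a \<in> nilradical A}"

definition nearly_reduced :: "('a, 'b) ring_scheme \<Rightarrow> bool" where
  "nearly_reduced A \<longleftrightarrow> reg A = areg A"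

definition prod_ring :: "'i set \<Rightarrow> ('i \<Rightarrow> ('a, 'b) ring_scheme) \<Rightarrow> ('i \<Rightarrow> 'a) ring" where
  "prod_ring I R =
    \<lparr> carrier = (\<Pi>\<^sub>E i\<in>I. carrier (R i)),
      mult = (\<lambda>x y. \<lambda>i\<in>I. x i \<otimes>\<^bsub>R i\<^esub> y i),
      one = (\<lambda>i\<in>I. \<one>\<^bsub>R i\<^esub>),
      zero = (\<lambda>i\<in>I. \<zero>\<^bsub>R i\<^esub>),
      add = (\<lambda>x y. \<lambda>i\<in>I. x i \<oplus>\<^bsub>R i\<^esub> y i) \<rparr>"

end

theory Submission
  imports Defs
begin

lemma pow_prod:
  "x [^]\<^bsub>prod_ring I R\<^esub> (n::nat) = (\<lambda>i\<in>I. x i [^]\<^bsub>R i\<^esub> n)"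
  by (induction n) (simp_all add: prod_ring_def fun_eq_iff)

lemma nil_prod:
  "a \<in> nilradical (prod_ring I R) \<longleftrightarrow>
     a \<in> carrier (prod_ring I R) \<and> (\<exists>n::nat. \<forall>i\<in>I. a i [^]\<^bsub>R i\<^esub> n = \<zero>\<^bsub>R i\<^esub>)"
  unfolding nilradical_def pow_prod
  by (auto simp: prod_ring_def restrict_def fun_eq_iff; metis)

lemma ring_pow_zero_add:
  assumes "ring A" "x \<in> carrier A" "x [^]\<^bsub>A\<^esub> (n::nat) = \<zero>\<^bsub>A\<^esub>"
  shows "x [^]\<^bsub>A\<^esub> (n + k) = \<zero>\<^bsub>A\<^esub>"
proof -
  interpret ring A by fact
  have "x [^]\<^bsub>A\<^esub> (n + k) = x [^]\<^bsub>A\<^esub> n \<otimes>\<^bsub>A\<^esub> x [^]\<^bsub>A\<^esub> k" using assms(2) by (simp add: nat_pow_mult)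
  thus ?thesis using assms by simp
qed

lemma cr_zero: assumes "cring A" shows "\<zero>\<^bsub>A\<^esub> \<in> carrier A"
proof - interpret cring A by fact show ?thesis by simp qed

lemma cr_one: assumes "cring A" shows "\<one>\<^bsub>A\<^esub> \<in> carrier A"
proof - interpret cring A by fact show ?thesis by simp qed

lemma cr_mult: assumes "cring A" "x \<in> carrier A" "y \<in> carrier A" shows "x \<otimes>\<^bsub>A\<^esub> y \<in> carrier A"
proof - interpret cring A by fact show ?thesis using assms by simp qed

lemma cr_lone: assumes "cring A" "x \<in> carrier A" shows "\<one>\<^bsub>A\<^esub> \<otimes>\<^bsub>A\<^esub> x = x"
proof - interpret cring A by fact show ?thesis using assms by simp qed

lemma cr_rnull: assumes "cring A" "x \<in> carrier A" shows "x \<otimes>\<^bsub>A\<^esub> \<zero>\<^bsub>A\<^esub> = \<zero>\<^bsub>A\<^esub>"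
proof - interpret cring A by fact show ?thesis using assms by simp qed

lemma cr_zpow: assumes "cring A" shows "\<zero>\<^bsub>A\<^esub> [^]\<^bsub>A\<^esub> (Suc n) = \<zero>\<^bsub>A\<^esub>"
proof - interpret cring A by fact show ?thesis by simp qed

lemma reg_pow:
  assumes "cring A" "x \<in> reg A" "b \<in> carrier A"
    "(x \<otimes>\<^bsub>A\<^esub> b) [^]\<^bsub>A\<^esub> (n::nat) = \<zero>\<^bsub>A\<^esub>"
  shows "b [^]\<^bsub>A\<^esub> n = \<zero>\<^bsub>A\<^esub>"
proof -
  interpret cring A by fact
  have xc: "x \<in> carrier A" using assms(2) by (simp add: reg_def)
  have powreg: "\<And>b. b \<in> carrier A \<Longrightarrow> x [^]\<^bsub>A\<^esub> m \<otimes>\<^bsub>A\<^esub> b = \<zero>\<^bsub>A\<^esub> \<Longrightarrow> b = \<zero>\<^bsub>A\<^esub>" for m :: nat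
  proof (induction m)
    case 0 thus ?case by simp
  next
    case (Suc m)
    have "x [^]\<^bsub>A\<^esub> Suc m \<otimes>\<^bsub>A\<^esub> b = x [^]\<^bsub>A\<^esub> m \<otimes>\<^bsub>A\<^esub> (x \<otimes>\<^bsub>A\<^esub> b)" using xc Suc.prems(1) by (simp add: m_assoc)
    hence "x \<otimes>\<^bsub>A\<^esub> b = \<zero>\<^bsub>A\<^esub>" using Suc xc by simp
    thus ?case using assms(2) Suc.prems(1) by (simp add: reg_def)
  qed
  have "x [^]\<^bsub>A\<^esub> n \<otimes>\<^bsub>A\<^esub> b [^]\<^bsub>A\<^esub> n = \<zero>\<^bsub>A\<^esub>" using assms xc by (simp add: nat_pow_distrib)
  thus ?thesis using powreg assms(3) by simp
qed

lemma reg_sub_areg: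
  assumes "cring A"
  shows "reg A \<subseteq> areg A"
proof
  fix x assume x: "x \<in> reg A"
  hence xc: "x \<in> carrier A" by (simp add: reg_def)
  show "x \<in> areg A" unfolding areg_def
  proof (intro CollectI conjI ballI impI xc)
    fix a assume a: "a \<in> carrier A" and "x \<otimes>\<^bsub>A\<^esub> a \<in> nilradical A"
    then obtain n :: nat where "(x \<otimes>\<^bsub>A\<^esub> a) [^]\<^bsub>A\<^esub> n = \<zero>\<^bsub>A\<^esub>" by (auto simp: nilradical_def)
    hence "a [^]\<^bsub>A\<^esub> n = \<zero>\<^bsub>A\<^esub>" using reg_pow[OF assms x a] by simp
    thus "a \<in> nilradical A" using a by (auto simp: nilradical_def)
  qed
qed

lemma reg_prod:
  assumes "\<And>i. i \<in> I \<Longrightarrow> cring (R i)"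
  shows "x \<in> reg (prod_ring I R) \<longleftrightarrow>
     x \<in> carrier (prod_ring I R) \<and> (\<forall>i\<in>I. x i \<in> reg (R i))"
proof
  assume x: "x \<in> reg (prod_ring I R)"
  hence xc: "x \<in> carrier (prod_ring I R)" by (simp add: reg_def)
  show "x \<in> carrier (prod_ring I R) \<and> (\<forall>i\<in>I. x i \<in> reg (R i))"
  proof (intro conjI xc ballI)
    fix i assume i: "i \<in> I"
    interpret Ri: cring "R i" using assms i by simp
    show "x i \<in> reg (R i)" unfolding reg_def
    proof (intro CollectI conjI ballI impI)
      show "x i \<in> carrier (R i)" using xc i by (auto simp: prod_ring_def)
      fix b assume b: "b \<in> carrier (R i)" "x i \<otimes>\<^bsub>R i\<^esub> b = \<zero>\<^bsub>R i\<^esub>"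
      define a where "a = (\<lambda>k\<in>I. if k = i then b else \<zero>\<^bsub>R k\<^esub>)"
      have ac: "a \<in> carrier (prod_ring I R)"
        using b assms by (auto simp: a_def prod_ring_def cr_zero)
      have "x \<otimes>\<^bsub>prod_ring I R\<^esub> a = \<zero>\<^bsub>prod_ring I R\<^esub>"
      proof -
        have "\<And>k. k \<in> I \<Longrightarrow> x k \<otimes>\<^bsub>R k\<^esub> a k = \<zero>\<^bsub>R k\<^esub>"
        proof -
          fix k assume k: "k \<in> I"
          interpret Rk: cring "R k" using assms k by simp
          have "x k \<in> carrier (R k)" using xc k by (auto simp: prod_ring_def)
          thus "x k \<otimes>\<^bsub>R k\<^esub> a k = \<zero>\<^bsub>R k\<^esub>" using b k by (auto simp: a_def)
        qed
        thus ?thesis by (auto simp: prod_ring_def)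
      qed
      hence "a = \<zero>\<^bsub>prod_ring I R\<^esub>" using x ac by (simp add: reg_def)
      hence "a i = \<zero>\<^bsub>R i\<^esub>" using i by (simp add: prod_ring_def)
      thus "b = \<zero>\<^bsub>R i\<^esub>" using i by (simp add: a_def)
    qed
  qed
next
  assume h: "x \<in> carrier (prod_ring I R) \<and> (\<forall>i\<in>I. x i \<in> reg (R i))"
  show "x \<in> reg (prod_ring I R)" unfolding reg_def
  proof (intro CollectI conjI ballI impI)
    show "x \<in> carrier (prod_ring I R)" using h by simp
    fix a assume a: "a \<in> carrier (prod_ring I R)" "x \<otimes>\<^bsub>prod_ring I R\<^esub> a = \<zero>\<^bsub>prod_ring I R\<^esub>"
    have "\<forall>i\<in>I. a i = \<zero>\<^bsub>R i\<^esub>"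
    proof
      fix i assume i: "i \<in> I"
      have "x i \<otimes>\<^bsub>R i\<^esub> a i = \<zero>\<^bsub>R i\<^esub>" using a(2) i
        by (auto simp: prod_ring_def fun_eq_iff dest: spec[of _ i])
      moreover have "a i \<in> carrier (R i)" using a(1) i by (auto simp: prod_ring_def)
      ultimately show "a i = \<zero>\<^bsub>R i\<^esub>" using h i by (auto simp: reg_def)
    qed
    thus "a = \<zero>\<^bsub>prod_ring I R\<^esub>" using a(1)
      by (auto simp: prod_ring_def fun_eq_iff PiE_def extensional_def)
  qed
qed


lemma nr_iff:
  assumes "cring A"
  shows "nearly_reduced A \<longleftrightarrow> areg A \<subseteq> reg A"
  using reg_sub_areg[OF assms] unfolding nearly_reduced_def by blast

theorem mainTheorem8:
  fixes I :: "'i set" and R :: "'i \<Rightarrow> ('a, 'b) ring_scheme"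
  assumes "\<And>i. i \<in> I \<Longrightarrow> cring (R i)"
  shows "nearly_reduced (prod_ring I R) \<longleftrightarrow> (\<forall>i\<in>I. nearly_reduced (R i))"
proof -
  let ?P = "prod_ring I R"
  have rng: "\<And>i. i \<in> I \<Longrightarrow> ring (R i)" by (rule cring.axioms(1)[OF assms])
  have eq_P: "nearly_reduced ?P \<longleftrightarrow> areg ?P \<subseteq> reg ?P"
  proof -
    have "reg ?P \<subseteq> areg ?P"
    proof
      fix x assume x: "x \<in> reg ?P"
      have xx: "x \<in> carrier ?P \<and> (\<forall>i\<in>I. x i \<in> reg (R i))"
        by (rule iffD1[OF reg_prod[OF assms] x])
      have xc: "x \<in> carrier ?P" using xx by (rule conjunct1)
      have xr: "\<forall>i\<in>I. x i \<in> reg (R i)" using xx by (rule conjunct2)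
      show "x \<in> areg ?P" unfolding areg_def
      proof (intro CollectI conjI ballI impI xc)
        fix a assume a: "a \<in> carrier ?P" "x \<otimes>\<^bsub>?P\<^esub> a \<in> nilradical ?P"
        have "\<exists>n::nat. \<forall>i\<in>I. (x \<otimes>\<^bsub>?P\<^esub> a) i [^]\<^bsub>R i\<^esub> n = \<zero>\<^bsub>R i\<^esub>"
          using a(2) by (simp only: nil_prod)
        then obtain n :: nat where n: "\<forall>i\<in>I. (x \<otimes>\<^bsub>?P\<^esub> a) i [^]\<^bsub>R i\<^esub> n = \<zero>\<^bsub>R i\<^esub>"
          by (elim exE)
        have "\<forall>i\<in>I. a i [^]\<^bsub>R i\<^esub> n = \<zero>\<^bsub>R i\<^esub>"
        proof
          fix i assume i: "i \<in> I"
          have ai: "a i \<in> carrier (R i)" using a i by (auto simp: prod_ring_def)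
          have "(x \<otimes>\<^bsub>?P\<^esub> a) i = x i \<otimes>\<^bsub>R i\<^esub> a i" using i by (simp add: prod_ring_def)
          hence e: "(x i \<otimes>\<^bsub>R i\<^esub> a i) [^]\<^bsub>R i\<^esub> n = \<zero>\<^bsub>R i\<^esub>"
            using n i by metis
          have xi: "x i \<in> reg (R i)" using xr i by blast
          show "a i [^]\<^bsub>R i\<^esub> n = \<zero>\<^bsub>R i\<^esub>"
            by (rule reg_pow[OF assms[OF i] xi ai e])
        qed
        thus "a \<in> nilradical ?P" unfolding nil_prod using a(1) by blast
      qed
    qed
    thus ?thesis unfolding nearly_reduced_def by blast
  qed
  show ?thesis
  proof
    assume nrP: "nearly_reduced ?P"
    show "\<forall>j\<in>I. nearly_reduced (R j)"
    proof
      fix j assume j: "j \<in> I"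
      show "nearly_reduced (R j)" unfolding nr_iff[OF assms[OF j]]
      proof
        fix y assume y: "y \<in> areg (R j)"
        hence yc: "y \<in> carrier (R j)" by (simp add: areg_def)
        define x where "x = (\<lambda>k\<in>I. if k = j then y else \<one>\<^bsub>R k\<^esub>)"
        have xc: "x \<in> carrier ?P" using yc assms by (auto simp: x_def prod_ring_def cr_one)
        have "x \<in> areg ?P" unfolding areg_def
        proof (intro CollectI conjI ballI impI xc)
          fix a assume a: "a \<in> carrier ?P" "x \<otimes>\<^bsub>?P\<^esub> a \<in> nilradical ?P"
          have "\<exists>n::nat. \<forall>i\<in>I. (x \<otimes>\<^bsub>?P\<^esub> a) i [^]\<^bsub>R i\<^esub> n = \<zero>\<^bsub>R i\<^esub>"
            using a(2) by (simp only: nil_prod)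
          then obtain n :: nat where n: "\<forall>i\<in>I. (x \<otimes>\<^bsub>?P\<^esub> a) i [^]\<^bsub>R i\<^esub> n = \<zero>\<^bsub>R i\<^esub>"
            by (elim exE)
          have ac: "\<forall>i\<in>I. a i \<in> carrier (R i)" using a(1) by (auto simp: prod_ring_def)
          have "(y \<otimes>\<^bsub>R j\<^esub> a j) [^]\<^bsub>R j\<^esub> n = \<zero>\<^bsub>R j\<^esub>"
            using n j by (auto simp: prod_ring_def x_def)
          moreover have "y \<otimes>\<^bsub>R j\<^esub> a j \<in> carrier (R j)" using ac j by (intro cr_mult[OF assms[OF j] yc]) blast
          ultimately have "y \<otimes>\<^bsub>R j\<^esub> a j \<in> nilradical (R j)" by (auto simp: nilradical_def)
          hence "a j \<in> nilradical (R j)" using y ac j by (auto simp: areg_def)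
          then obtain m :: nat where m: "a j [^]\<^bsub>R j\<^esub> m = \<zero>\<^bsub>R j\<^esub>" by (auto simp: nilradical_def)
          have "\<forall>i\<in>I. a i [^]\<^bsub>R i\<^esub> (n + m) = \<zero>\<^bsub>R i\<^esub>"
          proof
            fix i assume i: "i \<in> I"
            show "a i [^]\<^bsub>R i\<^esub> (n + m) = \<zero>\<^bsub>R i\<^esub>"
            proof (cases "i = j")
              case True
              have ajc: "a j \<in> carrier (R j)" using ac j by blast
              have "a j [^]\<^bsub>R j\<^esub> (m + n) = \<zero>\<^bsub>R j\<^esub>" by (rule ring_pow_zero_add[OF rng[OF j] ajc m])
              thus ?thesis using True by (simp add: add.commute)
            next
              case False
              have "(x \<otimes>\<^bsub>?P\<^esub> a) i = a i" using False i ac assms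
                by (auto simp: prod_ring_def x_def cr_lone)
              hence an: "a i [^]\<^bsub>R i\<^esub> n = \<zero>\<^bsub>R i\<^esub>" using n i by metis
              have aic: "a i \<in> carrier (R i)" using ac i by blast
              show ?thesis by (rule ring_pow_zero_add[OF rng[OF i] aic an])
            qed
          qed
          thus "a \<in> nilradical ?P" unfolding nil_prod using a(1) by blast
        qed
        moreover have "reg ?P = areg ?P" using nrP unfolding nearly_reduced_def .
        ultimately have "x \<in> reg ?P" by simp
        hence "x j \<in> reg (R j)" using j by (simp add: reg_prod[OF assms])
        thus "y \<in> reg (R j)" using j by (simp add: x_def)
      qed
    qed
  next
    assume all: "\<forall>i\<in>I. nearly_reduced (R i)"
    show "nearly_reduced ?P" unfolding eq_P
    proof
      fix x assume x: "x \<in> areg ?P"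
      hence xc: "x \<in> carrier ?P" by (simp add: areg_def)
      have "\<forall>i\<in>I. x i \<in> reg (R i)"
      proof
        fix i assume i: "i \<in> I"
        have xic: "x i \<in> carrier (R i)" using xc i by (auto simp: prod_ring_def)
        have "x i \<in> areg (R i)" unfolding areg_def
        proof (intro CollectI conjI ballI impI xic)
          fix b assume b: "b \<in> carrier (R i)" "x i \<otimes>\<^bsub>R i\<^esub> b \<in> nilradical (R i)"
          then obtain n :: nat where n: "(x i \<otimes>\<^bsub>R i\<^esub> b) [^]\<^bsub>R i\<^esub> n = \<zero>\<^bsub>R i\<^esub>"
            by (auto simp: nilradical_def)
          define a where "a = (\<lambda>k\<in>I. if k = i then b else \<zero>\<^bsub>R k\<^esub>)"
          have ac: "a \<in> carrier ?P" using b assms by (auto simp: a_def prod_ring_def cr_zero)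
          have xac: "x \<otimes>\<^bsub>?P\<^esub> a \<in> carrier ?P"
          proof -
            have "\<And>k. k \<in> I \<Longrightarrow> x k \<otimes>\<^bsub>R k\<^esub> a k \<in> carrier (R k)"
            proof -
              fix k assume k: "k \<in> I"
              have "x k \<in> carrier (R k)" "a k \<in> carrier (R k)"
                using xc ac k by (auto simp: prod_ring_def)
              thus "x k \<otimes>\<^bsub>R k\<^esub> a k \<in> carrier (R k)" by (rule cr_mult[OF assms[OF k]])
            qed
            thus ?thesis by (auto simp: prod_ring_def)
          qed
          have "\<forall>k\<in>I. (x \<otimes>\<^bsub>?P\<^esub> a) k [^]\<^bsub>R k\<^esub> (n + 1) = \<zero>\<^bsub>R k\<^esub>"
          proof
            fix k assume k: "k \<in> I"
            show "(x \<otimes>\<^bsub>?P\<^esub> a) k [^]\<^bsub>R k\<^esub> (n + 1) = \<zero>\<^bsub>R k\<^esub>"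
            proof (cases "k = i")
              case True
              have xbc: "x i \<otimes>\<^bsub>R i\<^esub> b \<in> carrier (R i)" by (rule cr_mult[OF assms[OF i] xic b(1)])
              have e1: "(x i \<otimes>\<^bsub>R i\<^esub> b) [^]\<^bsub>R i\<^esub> (n + 1) = \<zero>\<^bsub>R i\<^esub>"
                by (rule ring_pow_zero_add[OF rng[OF i] xbc n])
              have e2: "(x \<otimes>\<^bsub>?P\<^esub> a) i = x i \<otimes>\<^bsub>R i\<^esub> b" using i by (simp add: prod_ring_def a_def)
              show ?thesis using True e1 e2 by metis
            next
              case False
              have "x k \<in> carrier (R k)" using xc k by (auto simp: prod_ring_def)
              hence "(x \<otimes>\<^bsub>?P\<^esub> a) k = \<zero>\<^bsub>R k\<^esub>" using False k assms
                by (auto simp: prod_ring_def a_def cr_rnull)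
              moreover have "\<zero>\<^bsub>R k\<^esub> [^]\<^bsub>R k\<^esub> (Suc n) = \<zero>\<^bsub>R k\<^esub>" by (rule cr_zpow[OF assms[OF k]])
              ultimately show ?thesis by simp
            qed
          qed
          hence "x \<otimes>\<^bsub>?P\<^esub> a \<in> nilradical ?P" unfolding nil_prod using xac by blast
          hence "a \<in> nilradical ?P" using x ac by (auto simp: areg_def)
          hence "\<exists>m::nat. \<forall>k\<in>I. a k [^]\<^bsub>R k\<^esub> m = \<zero>\<^bsub>R k\<^esub>" unfolding nil_prod by (rule conjunct2)
          then obtain m :: nat where "\<forall>k\<in>I. a k [^]\<^bsub>R k\<^esub> m = \<zero>\<^bsub>R k\<^esub>" by (elim exE)
          hence "b [^]\<^bsub>R i\<^esub> m = \<zero>\<^bsub>R i\<^esub>" using i by (force simp: a_def)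
          thus "b \<in> nilradical (R i)" using b by (auto simp: nilradical_def)
        qed
        moreover have "nearly_reduced (R i)" using all i by blast
        ultimately show "x i \<in> reg (R i)" unfolding nearly_reduced_def by simp
      qed
      thus "x \<in> reg ?P" using xc by (simp add: reg_prod[OF assms])
    qed
  qed
qed

end
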